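(* Let $\vec r\in\mathbb Z^n$. For every $\sigma,\tau\in H_{\vec r}$, $$\varphi_{\vec r}(\sigma)\varphi_{\vec r}(\tau)=\varphi_{\vec r}(\sigma\tau)\,\psi_{\vec r}(\sigma,\tau).$$ Consequently, the restriction of $\psi_{\vec r}$ to $H_{\vec r}\times H_{\vec r}$ is a 2-cocycle on $H_{\vec r}$ with values in $\mathbb T$.
   Context: $n\ge2$, $\theta\in M_n(\mathbb R)$ skew-symmetric, $\omega_{ij}=e^{2\pi i\theta_{ij}}$. $S_n$ acts on $\mathbb Z^n$ by $\sigma\vec r=(r_{\sigma^{-1}(1)},\dots,r_{\sigma^{-1}(n)})$; $H_{\vec r}=\{\sigma\in S_n:\sigma\vec r=\vec r\}$. For $\sigma,\tau\in S_n$: $\vartheta_{\vec r}(\sigma,\tau)=\prod_{i<j,\ \sigma(i)>\sigma(j)}(\omega_{\tau^{-1}(j),\tau^{-1}(i)})^{r_{\sigma(i)}r_{\sigma(j)}}$; $\psi_{\vec r}(\sigma,\tau)=\overline{\vartheta_{\vec r}(\sigma,e)}\,\vartheta_{\vec r}(\sigma,\tau)$ ($e$ the identity permutation); $\varphi_{\vec r}(\sigma)=\overline{\vartheta_{\vec r}(\sigma,e)}$ for $\sigma\in H_{\vec r}$. A 2-cocycle on a group $G$ with values in an abelian group is a function $\psi:G\times G\to A$ with $\psi(g,e)=\psi(e,g)=1$ and $\psi(g,h)\psi(gh,k)=\psi(g,hk)\psi(h,k)$ for all $g,h,k$. *)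

theory Defs
  imports Complex_Main "HOL-Combinatorics.Permutations" "HOL-Algebra.Group"
begin

text \<open>Indices run over {1..n}; permutations are bijections permuting {1..n}.\<close>

definition omega :: "(nat \<Rightarrow> nat \<Rightarrow> real) \<Rightarrow> nat \<Rightarrow> nat \<Rightarrow> complex" where
  "omega \<theta> i j = exp (2 * complex_of_real pi * imaginary_unit * complex_of_real (\<theta> i j))"

definition perm_act :: "(nat \<Rightarrow> nat) \<Rightarrow> (nat \<Rightarrow> int) \<Rightarrow> (nat \<Rightarrow> int)" where
  "perm_act \<sigma> r = (\<lambda>i. r (inv_into UNIV \<sigma> i))"

definition Hr :: "nat \<Rightarrow> (nat \<Rightarrow> int) \<Rightarrow> (nat \<Rightarrow> nat) set" where
  "Hr n r = {\<sigma>. \<sigma> permutes {1..n} \<and> (\<forall>i\<in>{1..n}. perm_act \<sigma> r i = r i)}"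

definition vartheta :: "nat \<Rightarrow> (nat \<Rightarrow> nat \<Rightarrow> real) \<Rightarrow> (nat \<Rightarrow> int)
    \<Rightarrow> (nat \<Rightarrow> nat) \<Rightarrow> (nat \<Rightarrow> nat) \<Rightarrow> complex" where
  "vartheta n \<theta> r \<sigma> \<tau> =
     (\<Prod>(i,j)\<in>{(i,j). i \<in> {1..n} \<and> j \<in> {1..n} \<and> i < j \<and> \<sigma> i > \<sigma> j}.
        (omega \<theta> (inv_into UNIV \<tau> j) (inv_into UNIV \<tau> i)) powi (r (\<sigma> i) * r (\<sigma> j)))"

definition psi :: "nat \<Rightarrow> (nat \<Rightarrow> nat \<Rightarrow> real) \<Rightarrow> (nat \<Rightarrow> int)
    \<Rightarrow> (nat \<Rightarrow> nat) \<Rightarrow> (nat \<Rightarrow> nat) \<Rightarrow> complex" where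
  "psi n \<theta> r \<sigma> \<tau> = cnj (vartheta n \<theta> r \<sigma> id) * vartheta n \<theta> r \<sigma> \<tau>"

definition phi :: "nat \<Rightarrow> (nat \<Rightarrow> nat \<Rightarrow> real) \<Rightarrow> (nat \<Rightarrow> int)
    \<Rightarrow> (nat \<Rightarrow> nat) \<Rightarrow> complex" where
  "phi n \<theta> r \<sigma> = cnj (vartheta n \<theta> r \<sigma> id)"

definition Hr_group :: "nat \<Rightarrow> (nat \<Rightarrow> int) \<Rightarrow> (nat \<Rightarrow> nat) monoid" where
  "Hr_group n r = \<lparr>carrier = Hr n r, mult = (\<circ>), one = id\<rparr>"

definition two_cocycle :: "('a, 'b) monoid_scheme \<Rightarrow> complex set \<Rightarrow> ('a \<Rightarrow> 'a \<Rightarrow> complex) \<Rightarrow> bool" where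
  "two_cocycle G A \<psi> \<longleftrightarrow> group G
     \<and> (\<forall>g\<in>carrier G. \<forall>h\<in>carrier G. \<psi> g h \<in> A)
     \<and> (\<forall>g\<in>carrier G. \<psi> g \<one>\<^bsub>G\<^esub> = 1 \<and> \<psi> \<one>\<^bsub>G\<^esub> g = 1)
     \<and> (\<forall>g\<in>carrier G. \<forall>h\<in>carrier G. \<forall>k\<in>carrier G.
          \<psi> g h * \<psi> (g \<otimes>\<^bsub>G\<^esub> h) k = \<psi> g (h \<otimes>\<^bsub>G\<^esub> k) * \<psi> h k)"

definition circle_T :: "complex set" where
  "circle_T = {z. cmod z = 1}"

end

theory Submission imports Defs begin

definition E :: "real \<Rightarrow> complex" where
  "E x = exp (2 * complex_of_real pi * imaginary_unit * complex_of_real x)"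

lemma E_add: "E x * E y = E (x+y)"
  unfolding E_def by (simp add: exp_add[symmetric] algebra_simps)

lemma E_norm: "cmod (E x) = 1"
  unfolding E_def by simp

lemma E_0: "E 0 = 1"
  unfolding E_def by simp

lemma E_cnj: "cnj (E x) = E (-x)"
proof -
  have "E x * cnj (E x) = 1" using complex_norm_square[of "E x"] E_norm[of x] by simp
  moreover have "E x * E (-x) = 1" by (simp add: E_add E_0)
  ultimately show ?thesis
    by (metis mult.left_commute mult_1_right mult.commute)
qed

lemma E_sum: "finite A \<Longrightarrow> (\<Prod>x\<in>A. E (f x)) = E (\<Sum>x\<in>A. f x)"
  by (induction A rule: finite_induct) (auto simp: E_0 E_add)

lemma omega_powi: "omega \<theta> a b powi k = E (\<theta> a b * of_int k)"
  unfolding omega_def E_def by (simp add: exp_power_int algebra_simps)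

definition S :: "nat \<Rightarrow> (nat \<Rightarrow> nat \<Rightarrow> real) \<Rightarrow> (nat \<Rightarrow> int)
    \<Rightarrow> (nat \<Rightarrow> nat) \<Rightarrow> (nat \<Rightarrow> nat) \<Rightarrow> real" where
  "S n \<theta> r \<sigma> \<tau> = (\<Sum>(i,j)\<in>{(i,j). i \<in> {1..n} \<and> j \<in> {1..n} \<and> i < j \<and> \<sigma> i > \<sigma> j}.
        \<theta> (inv_into UNIV \<tau> j) (inv_into UNIV \<tau> i) * real_of_int (r (\<sigma> i) * r (\<sigma> j)))"

lemma fin_pairs: "finite {(i,j). i \<in> {1..n::nat} \<and> j \<in> {1..n} \<and> P i j}"
  by (rule finite_subset[of _ "{1..n} \<times> {1..n}"]) auto

lemma vartheta_E: "vartheta n \<theta> r \<sigma> \<tau> = E (S n \<theta> r \<sigma> \<tau>)"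
  unfolding vartheta_def S_def omega_powi
  by (subst E_sum[symmetric], rule fin_pairs) (simp add: case_prod_beta)

lemma Hr_iff: "\<sigma> \<in> Hr n r \<longleftrightarrow> \<sigma> permutes {1..n} \<and> (\<forall>i. r (\<sigma> i) = r i)"
proof
  assume a: "\<sigma> \<in> Hr n r"
  hence p: "\<sigma> permutes {1..n}" and h: "\<forall>i\<in>{1..n}. r (inv_into UNIV \<sigma> i) = r i"
    by (auto simp: Hr_def perm_act_def)
  have "r (inv_into UNIV \<sigma> i) = r i" for i
    using h p by (cases "i \<in> {1..n}") (auto simp: permutes_not_in[OF permutes_inv[OF p]])
  hence "r (\<sigma> i) = r i" for i
    by (metis p permutes_inverses(2))
  with p show "\<sigma> permutes {1..n} \<and> (\<forall>i. r (\<sigma> i) = r i)" by blast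
next
  assume "\<sigma> permutes {1..n} \<and> (\<forall>i. r (\<sigma> i) = r i)"
  hence p: "\<sigma> permutes {1..n}" and h: "\<forall>i. r (\<sigma> i) = r i" by auto
  have "r (inv_into UNIV \<sigma> i) = r i" for i
    by (metis h p permutes_inverses(1))
  with p show "\<sigma> \<in> Hr n r" by (auto simp: Hr_def perm_act_def)
qed

lemma Hr_comp: "\<sigma> \<in> Hr n r \<Longrightarrow> \<tau> \<in> Hr n r \<Longrightarrow> \<sigma> \<circ> \<tau> \<in> Hr n r"
  by (auto simp: Hr_iff permutes_compose)

lemma Hr_inv: "\<sigma> \<in> Hr n r \<Longrightarrow> inv_into UNIV \<sigma> \<in> Hr n r"
  unfolding Hr_iff by (metis permutes_inv permutes_inverses(1))

lemma Hr_id: "id \<in> Hr n r"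
  by (auto simp: Hr_iff permutes_id)

lemma Hr_group: "group (Hr_group n r)"
  apply (rule groupI)
  apply (auto simp: Hr_group_def Hr_comp Hr_id comp_assoc)
  apply (rule_tac x="inv_into UNIV x" in bexI)
   apply (auto simp: Hr_inv Hr_iff permutes_inv_o(2))
  apply (auto simp: Hr_inv[unfolded Hr_iff] permutes_inv)
  done

lemma pairsum:
  "(\<Sum>(i,j)\<in>{(i,j). i \<in> A \<and> j \<in> A \<and> P i j}. f i j) =
   (\<Sum>i\<in>A. \<Sum>j\<in>A. if P i j then f i j else (0::real))" if "finite A"
proof -
  have "{(i,j). i \<in> A \<and> j \<in> A \<and> P i j} = {x \<in> A \<times> A. P (fst x) (snd x)}" by auto
  hence "(\<Sum>(i,j)\<in>{(i,j). i \<in> A \<and> j \<in> A \<and> P i j}. f i j) =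
     (\<Sum>x\<in>A \<times> A. if P (fst x) (snd x) then f (fst x) (snd x) else 0)"
    using that by (simp add: sum.inter_filter case_prod_beta)
  also have "\<dots> = (\<Sum>i\<in>A. \<Sum>j\<in>A. if P i j then f i j else (0::real))"
    by (simp add: sum.cartesian_product case_prod_beta)
  finally show ?thesis .
qed

definition T :: "nat set \<Rightarrow> (nat \<Rightarrow> nat \<Rightarrow> real) \<Rightarrow> (nat \<Rightarrow> nat) \<Rightarrow> real" where
  "T A G \<pi> = (\<Sum>i\<in>A. \<Sum>j\<in>A. if \<pi> j < \<pi> i then G i j else 0)"

lemma halving:
  assumes p: "\<pi> permutes A" and fin: "finite A"
    and skew: "\<forall>a\<in>A. \<forall>b\<in>A. H b a = - H a b"
  shows "2 * (\<Sum>i\<in>A. \<Sum>j\<in>A. if i < j \<and> \<pi> j < \<pi> i then H i j else 0) = T A H \<pi> - T A H id"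
proof -
  let ?X = "(\<Sum>i\<in>A. \<Sum>j\<in>A. if i < j \<and> \<pi> j < \<pi> i then H i j else 0)"
  have "?X = (\<Sum>j\<in>A. \<Sum>i\<in>A. if i < j \<and> \<pi> j < \<pi> i then H i j else 0)"
    by (rule sum.swap)
  also have "\<dots> = (\<Sum>i\<in>A. \<Sum>j\<in>A. - (if j < i \<and> \<pi> i < \<pi> j then H i j else 0))"
  proof (intro sum.cong refl)
    fix i j assume "i \<in> A" "j \<in> A"
    hence "H j i = - H i j" using skew by blast
    thus "(if j < i \<and> \<pi> i < \<pi> j then H j i else 0) = - (if j < i \<and> \<pi> i < \<pi> j then H i j else 0)"
      by simp
  qed
  finally have X2: "?X = (\<Sum>i\<in>A. \<Sum>j\<in>A. - (if j < i \<and> \<pi> i < \<pi> j then H i j else 0))" .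
  have inj: "\<pi> i = \<pi> j \<Longrightarrow> i = j" for i j
    using p by (metis permutes_inj injD)
  have "2 * ?X = ?X + ?X" by simp
  also have "\<dots> = (\<Sum>i\<in>A. \<Sum>j\<in>A. (if i < j \<and> \<pi> j < \<pi> i then H i j else 0)
        - (if j < i \<and> \<pi> i < \<pi> j then H i j else 0))"
    apply (subst (2) X2)
    by (simp add: sum.distrib[symmetric])
  also have "\<dots> = (\<Sum>i\<in>A. \<Sum>j\<in>A. (if \<pi> j < \<pi> i then H i j else 0)
        - (if j < i then H i j else 0))"
  proof (intro sum.cong refl)
    fix i j assume "i \<in> A" "j \<in> A"
    show "(if i < j \<and> \<pi> j < \<pi> i then H i j else 0) - (if j < i \<and> \<pi> i < \<pi> j then H i j else 0)
       = (if \<pi> j < \<pi> i then H i j else 0) - (if j < i then H i j else 0)"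
    proof (cases "i = j")
      case False
      hence "\<pi> i \<noteq> \<pi> j" using inj by blast
      with False show ?thesis by (cases "i < j"; cases "\<pi> i < \<pi> j") auto
    qed simp
  qed
  also have "\<dots> = T A H \<pi> - T A H id"
    unfolding T_def by (simp add: sum_subtractf)
  finally show ?thesis .
qed

lemma reindex2:
  assumes "\<tau> permutes A"
  shows "(\<Sum>a\<in>A. \<Sum>b\<in>A. g a b) = (\<Sum>i\<in>A. \<Sum>j\<in>A. (g (\<tau> i) (\<tau> j) :: real))"
proof -
  have b: "bij_betw \<tau> A A" using assms by (rule permutes_imp_bij)
  have "(\<Sum>i\<in>A. \<Sum>j\<in>A. g (\<tau> i) (\<tau> j)) = (\<Sum>i\<in>A. \<Sum>b\<in>A. g (\<tau> i) b)"
    by (intro sum.cong refl sum.reindex_bij_betw[OF b])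
  also have "\<dots> = (\<Sum>a\<in>A. \<Sum>b\<in>A. g a b)"
    by (rule sum.reindex_bij_betw[OF b])
  finally show ?thesis by simp
qed


lemma key:
  assumes s: "\<sigma> \<in> Hr n r" and t: "\<tau> \<in> Hr n r"
    and skew: "\<forall>i\<in>{1..n}. \<forall>j\<in>{1..n}. \<theta> i j = - \<theta> j i"
  shows "S n \<theta> r (\<sigma> \<circ> \<tau>) id = S n \<theta> r \<tau> id + S n \<theta> r \<sigma> \<tau>"
proof -
  define N where "N = {1..n}"
  have fin: "finite N" by (simp add: N_def)
  define G where "G a b = \<theta> b a * (of_int (r a) * of_int (r b))" for a b
  define Gt where "Gt a b = G (inv_into UNIV \<tau> a) (inv_into UNIV \<tau> b)" for a b
  have sp: "\<sigma> permutes N" and sr: "\<And>i. r (\<sigma> i) = r i" using s by (auto simp: Hr_iff N_def)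
  have tp: "\<tau> permutes N" and tr: "\<And>i. r (\<tau> i) = r i" using t by (auto simp: Hr_iff N_def)
  have tir: "\<And>i. r (inv_into UNIV \<tau> i) = r i" using Hr_inv[OF t] by (auto simp: Hr_iff)
  have stp: "(\<sigma> \<circ> \<tau>) permutes N" by (rule permutes_compose[OF tp sp])
  have skG: "\<forall>a\<in>N. \<forall>b\<in>N. G b a = - G a b"
  proof (intro ballI)
    fix a b assume "a \<in> N" "b \<in> N"
    hence "\<theta> a b = - \<theta> b a" using skew unfolding N_def by blast
    thus "G b a = - G a b" unfolding G_def by simp
  qed
  have skGt: "\<forall>a\<in>N. \<forall>b\<in>N. Gt b a = - Gt a b"
  proof (intro ballI)
    fix a b assume "a \<in> N" "b \<in> N"
    hence "inv_into UNIV \<tau> a \<in> N" "inv_into UNIV \<tau> b \<in> N"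
      using permutes_in_image[OF permutes_inv[OF tp]] by auto
    thus "Gt b a = - Gt a b" unfolding Gt_def using skG by blast
  qed
  have hS: "S n \<theta> r \<pi> id = (\<Sum>i\<in>N. \<Sum>j\<in>N. if i < j \<and> \<pi> j < \<pi> i then G i j else 0)"
    if "\<pi> \<in> Hr n r" for \<pi>
  proof -
    have pr: "\<And>i. r (\<pi> i) = r i" using that by (auto simp: Hr_iff)
    show ?thesis unfolding S_def N_def[symmetric]
      apply (subst pairsum[OF fin])
      apply (intro sum.cong refl)
      apply (simp add: pr G_def)
      done
  qed
  have hSt: "S n \<theta> r \<sigma> \<tau> = (\<Sum>i\<in>N. \<Sum>j\<in>N. if i < j \<and> \<sigma> j < \<sigma> i then Gt i j else 0)"
    unfolding S_def N_def[symmetric]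
      apply (subst pairsum[OF fin])
      apply (intro sum.cong refl)
      apply (simp add: sr tir G_def Gt_def)
      done
  have R1: "T N Gt \<sigma> = T N G (\<sigma> \<circ> \<tau>)"
    unfolding T_def Gt_def
    apply (subst reindex2[OF tp])
    apply (intro sum.cong refl)
    apply (simp add: permutes_inverses(2)[OF tp])
    done
  have R2: "T N Gt id = T N G \<tau>"
    unfolding T_def Gt_def
    apply (subst reindex2[OF tp])
    apply (intro sum.cong refl)
    apply (simp add: permutes_inverses(2)[OF tp])
    done
  have "2 * S n \<theta> r (\<sigma> \<circ> \<tau>) id = T N G (\<sigma> \<circ> \<tau>) - T N G id"
    unfolding hS[OF Hr_comp[OF s t]] by (rule halving[OF stp fin skG])
  moreover have "2 * S n \<theta> r \<tau> id = T N G \<tau> - T N G id"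
    unfolding hS[OF t] by (rule halving[OF tp fin skG])
  moreover have "2 * S n \<theta> r \<sigma> \<tau> = T N Gt \<sigma> - T N Gt id"
    unfolding hSt by (rule halving[OF sp fin skGt])
  ultimately show ?thesis using R1 R2 by linarith
qed


lemma psi_E: "psi n \<theta> r \<sigma> \<tau> = E (- S n \<theta> r \<sigma> id + S n \<theta> r \<sigma> \<tau>)"
  unfolding psi_def vartheta_E E_cnj E_add ..

lemma phi_E: "phi n \<theta> r \<sigma> = E (- S n \<theta> r \<sigma> id)"
  unfolding phi_def vartheta_E E_cnj ..

lemma S_id: "S n \<theta> r id \<tau> = 0"
proof -
  have "{(i, j). i \<in> {1..n} \<and> j \<in> {1..n} \<and> i < j \<and> id i > id j} = {}" by auto
  then show ?thesis unfolding S_def by (subst \<open>_ = {}\<close>) simp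
qed

theorem proposition4p11:
  fixes n :: nat and \<theta> :: "nat \<Rightarrow> nat \<Rightarrow> real" and r :: "nat \<Rightarrow> int"
  assumes "n \<ge> 2"
    and "\<forall>i\<in>{1..n}. \<forall>j\<in>{1..n}. \<theta> i j = - \<theta> j i"
  shows "(\<forall>\<sigma>\<in>Hr n r. \<forall>\<tau>\<in>Hr n r.
            phi n \<theta> r \<sigma> * phi n \<theta> r \<tau> = phi n \<theta> r (\<sigma> \<circ> \<tau>) * psi n \<theta> r \<sigma> \<tau>)
         \<and> two_cocycle (Hr_group n r) circle_T (psi n \<theta> r)"
proof -
  let ?S = "\<lambda>\<pi>. S n \<theta> r \<pi> id"
  have psiH: "psi n \<theta> r \<sigma> \<tau> = E (?S (\<sigma> \<circ> \<tau>) - ?S \<tau> - ?S \<sigma>)"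
    if "\<sigma> \<in> Hr n r" "\<tau> \<in> Hr n r" for \<sigma> \<tau>
    unfolding psi_E key[OF that assms(2)] by (simp add: algebra_simps)
  have part1: "\<forall>\<sigma>\<in>Hr n r. \<forall>\<tau>\<in>Hr n r.
            phi n \<theta> r \<sigma> * phi n \<theta> r \<tau> = phi n \<theta> r (\<sigma> \<circ> \<tau>) * psi n \<theta> r \<sigma> \<tau>"
  proof (intro ballI)
    fix \<sigma> \<tau> assume a: "\<sigma> \<in> Hr n r" "\<tau> \<in> Hr n r"
    show "phi n \<theta> r \<sigma> * phi n \<theta> r \<tau> = phi n \<theta> r (\<sigma> \<circ> \<tau>) * psi n \<theta> r \<sigma> \<tau>"
      unfolding psiH[OF a] phi_E E_add by (simp add: algebra_simps)
  qed
  have cyc: "two_cocycle (Hr_group n r) circle_T (psi n \<theta> r)"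
    unfolding two_cocycle_def
  proof (intro conjI ballI)
    show "group (Hr_group n r)" by (rule Hr_group)
  next
    fix g h assume "g \<in> carrier (Hr_group n r)" "h \<in> carrier (Hr_group n r)"
    show "psi n \<theta> r g h \<in> circle_T" unfolding psi_E circle_T_def by (simp add: E_norm)
  next
    fix g assume "g \<in> carrier (Hr_group n r)"
    show "psi n \<theta> r g \<one>\<^bsub>Hr_group n r\<^esub> = 1"
      unfolding psi_E by (simp add: Hr_group_def E_0)
    show "psi n \<theta> r \<one>\<^bsub>Hr_group n r\<^esub> g = 1"
      unfolding psi_E by (simp add: Hr_group_def E_0 S_id)
  next
    fix g h k assume g: "g \<in> carrier (Hr_group n r)" and h: "h \<in> carrier (Hr_group n r)"
      and k: "k \<in> carrier (Hr_group n r)"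
    hence g': "g \<in> Hr n r" and h': "h \<in> Hr n r" and k': "k \<in> Hr n r"
      by (auto simp: Hr_group_def)
    show "psi n \<theta> r g h * psi n \<theta> r (g \<otimes>\<^bsub>Hr_group n r\<^esub> h) k =
          psi n \<theta> r g (h \<otimes>\<^bsub>Hr_group n r\<^esub> k) * psi n \<theta> r h k"
      unfolding Hr_group_def monoid.simps
      unfolding psiH[OF g' h'] psiH[OF Hr_comp[OF g' h'] k'] psiH[OF g' Hr_comp[OF h' k']] psiH[OF h' k']
        E_add by (simp add: comp_assoc algebra_simps)
  qed
  show ?thesis using part1 cyc by blast
qed

end
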